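(* Let $k\geq2$ and let $W\subseteq\mathbb{Z}_{3k}$, $\overline W=\mathbb{Z}_{3k}\setminus W$, satisfy: for every $i\in\mathbb{Z}_{3k}$, $|x^i\cap W|\geq2$ and $|C^i\cap\overline W|\geq2$; and for every $i\in\overline W$, $[i+2k,i+2k+\omega(i)]_{3k}\subseteq W$. Then there exists $i\in\overline W$ with $p^i\equiv1\pmod3$.
   Context: $\mathbb{Z}_{3k}=\{0,\dots,3k-1\}$ with addition modulo $3k$; $[a,b]_{3k}$ is the cyclic closed interval from $a$ to $b$. $C^i=\{i,\dots,i+k-1\}$ (mod $3k$), $x^i=\{i,i+k,i+2k\}$. For $i\in\overline W$, $\omega(i)=\min\{t\ge0:i+k+t\in\overline W\}$. For $i\in\overline W$ the sequence $(r^i_t)_{t\ge0}$ is defined by $r^i_0=i$, $r^i_t=r^i_{t-1}+k+\omega(r^i_{t-1})$ for $t\ge1$, and $p^i=\max\{t\ge0:\sum_{j=0}^{t-1}\omega(r^i_j)\le k-1\}$. *)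

theory Defs
  imports Main
begin

text \<open>Z_{3k} is modelled as the naturals {0..<3k} with arithmetic mod 3k.
  W is a subset of {0..<3k}; Wbar is its complement in {0..<3k}.\<close>

definition Wbar :: "nat \<Rightarrow> nat set \<Rightarrow> nat set" where
  "Wbar k W = {..<3*k} - W"

definition Cblk :: "nat \<Rightarrow> nat \<Rightarrow> nat set" where
  "Cblk k i = {(i + j) mod (3*k) | j. j < k}"

definition xset :: "nat \<Rightarrow> nat \<Rightarrow> nat set" where
  "xset k i = {i mod (3*k), (i + k) mod (3*k), (i + 2*k) mod (3*k)}"

text \<open>cyclic closed interval [a,b]_n from a to b\<close>
definition cint :: "nat \<Rightarrow> nat \<Rightarrow> nat \<Rightarrow> nat set" where
  "cint n a b = {(a + j) mod n | j. j \<le> (b mod n + n - a mod n) mod n}"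

definition omega :: "nat \<Rightarrow> nat set \<Rightarrow> nat \<Rightarrow> nat" where
  "omega k W i = (LEAST t. (i + k + t) mod (3*k) \<in> Wbar k W)"

fun rseq :: "nat \<Rightarrow> nat set \<Rightarrow> nat \<Rightarrow> nat \<Rightarrow> nat" where
  "rseq k W i 0 = i"
| "rseq k W i (Suc t) = (rseq k W i t + k + omega k W (rseq k W i t)) mod (3*k)"

definition pidx :: "nat \<Rightarrow> nat set \<Rightarrow> nat \<Rightarrow> nat" where
  "pidx k W i = (GREATEST t. (\<Sum>j<t. omega k W (rseq k W i j)) \<le> k - 1)"

end

theory Submission
  imports Defs
begin

lemma cint_arith:
  fixes a w n :: nat
  assumes "w < n"
  shows "((a + w) mod n + n - a mod n) mod n = w"
proof -
  have n0: "n > 0" using assms by simp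
  define r where "r = a mod n"
  have rl: "r < n" using n0 r_def by simp
  have e: "(a + w) mod n = (r + w) mod n" unfolding r_def by (simp add: mod_add_left_eq)
  show ?thesis
  proof (cases "r + w < n")
    case True
    then have "(a + w) mod n = r + w" using e by simp
    then have "(a + w) mod n + n - a mod n = w + n" using r_def by simp
    then show ?thesis using assms by simp
  next
    case False
    then have "(r + w) mod n = r + w - n" using rl assms
      by (simp add: le_mod_geq)
    then have "(a + w) mod n + n - a mod n = w" using e r_def False by simp
    then show ?thesis using assms by simp
  qed
qed

locale L =
  fixes k :: nat and W :: "nat set"
  assumes k2: "k \<ge> 2"
    and Wsub: "W \<subseteq> {..<3*k}"
    and hx: "\<forall>i<3*k. card (xset k i \<inter> W) \<ge> 2"
    and hC: "\<forall>i<3*k. card (Cblk k i \<inter> Wbar k W) \<ge> 2"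
    and hD: "\<forall>i\<in>Wbar k W. cint (3*k) (i + 2*k) (i + 2*k + omega k W i) \<subseteq> W"
begin

definition Bp :: "int \<Rightarrow> bool" where
  "Bp z \<longleftrightarrow> nat (z mod (3 * int k)) \<in> Wbar k W"

lemma Bp_cong: "x mod (3 * int k) = y mod (3 * int k) \<Longrightarrow> Bp (x + z) = Bp (y + z)"
  unfolding Bp_def by (metis mod_add_left_eq)

lemma Bp_shift: "Bp (z + m * (3 * int k)) = Bp z"
  unfolding Bp_def by simp

lemma Bp_nat: "Bp (int i) \<longleftrightarrow> i mod (3*k) \<in> Wbar k W"
proof -
  have "int i mod (3 * int k) = int (i mod (3*k))" by (simp add: of_nat_mod)
  then show ?thesis unfolding Bp_def by simp
qed

lemma Wbar_lt: "i \<in> Wbar k W \<Longrightarrow> i < 3*k" by (simp add: Wbar_def)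

lemma X: assumes "Bp z" shows "\<not> Bp (z + int k)"
proof
  assume b2: "Bp (z + int k)"
  define i where "i = nat (z mod (3 * int k))"
  have kp: "k > 0" using k2 by simp
  have iW: "i \<in> Wbar k W" using assms unfolding Bp_def i_def by simp
  have il: "i < 3*k" using Wbar_lt iW by simp
  have zi: "z mod (3 * int k) = int i" unfolding i_def using kp by simp
  have "(z + int k) mod (3 * int k) = (int i + int k) mod (3 * int k)"
    using zi by (metis mod_add_left_eq)
  also have "\<dots> = int ((i + k) mod (3*k))" by (simp add: of_nat_mod)
  finally have "(i + k) mod (3*k) \<in> Wbar k W" using b2 unfolding Bp_def by simp
  then have n2: "(i + k) mod (3*k) \<notin> W" by (simp add: Wbar_def)
  have n1: "i mod (3*k) \<notin> W" using iW il by (simp add: Wbar_def)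
  have "xset k i \<inter> W \<subseteq> {(i + 2*k) mod (3*k)}"
    using n1 n2 unfolding xset_def by auto
  then have "card (xset k i \<inter> W) \<le> 1"
    using card_mono[of "{(i + 2*k) mod (3*k)}"] by fastforce
  moreover have "card (xset k i \<inter> W) \<ge> 2" using hx il by blast
  ultimately show False by simp
qed

lemma X': "Bp z \<Longrightarrow> \<not> Bp (z - int k)"
  using X[of "z - int k"] by auto

lemma om_iff: "(i + k + t) mod (3*k) \<in> Wbar k W \<longleftrightarrow> Bp (int i + int k + int t)"
  using Bp_nat[of "i + k + t"] by simp

lemma om_props:
  assumes iW: "i \<in> Wbar k W"
  shows "Bp (int i + int k + int (omega k W i))"
    and "\<And>t. t < omega k W i \<Longrightarrow> \<not> Bp (int i + int k + int t)"
    and "omega k W i \<le> 2*k"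
    and "omega k W i \<ge> 1"
proof -
  have il: "i < 3*k" using Wbar_lt iW by simp
  have ex: "(i + k + 2*k) mod (3*k) \<in> Wbar k W"
  proof -
    have "i + k + 2*k = i + 3*k" by simp
    then have "(i + k + 2*k) mod (3*k) = i mod (3*k)" by (simp only: mod_add_self2)
    then have "(i + k + 2*k) mod (3*k) = i" using il by simp
    then show ?thesis using iW by simp
  qed
  have "(i + k + omega k W i) mod (3*k) \<in> Wbar k W"
    unfolding omega_def by (rule LeastI[of "\<lambda>t. (i + k + t) mod (3*k) \<in> Wbar k W", OF ex])
  then show "Bp (int i + int k + int (omega k W i))" using om_iff by simp
  show "\<And>t. t < omega k W i \<Longrightarrow> \<not> Bp (int i + int k + int t)"
  proof -
    fix t assume "t < omega k W i"
    then have "\<not> (i + k + t) mod (3*k) \<in> Wbar k W"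
      unfolding omega_def by (rule not_less_Least)
    then show "\<not> Bp (int i + int k + int t)" using om_iff by simp
  qed
  show "omega k W i \<le> 2*k" unfolding omega_def by (rule Least_le[of "\<lambda>t. (i + k + t) mod (3*k) \<in> Wbar k W", OF ex])
  have "Bp (int i)" using Bp_nat iW il by simp
  then have "\<not> Bp (int i + int k + int 0)" using X[of "int i"] by simp
  then have "omega k W i \<noteq> 0"
    using \<open>Bp (int i + int k + int (omega k W i))\<close> by (metis of_nat_0)
  then show "omega k W i \<ge> 1" by simp
qed

lemma D_prop:
  assumes iW: "i \<in> Wbar k W" and j: "j \<le> omega k W i"
  shows "\<not> Bp (int i + 2 * int k + int j)"
proof -
  have kp: "k > 0" using k2 by simp
  have wl: "omega k W i < 3*k" using om_props(3)[OF iW] kp by simp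
  have "((i + 2*k + omega k W i) mod (3*k) + 3*k - (i + 2*k) mod (3*k)) mod (3*k) = omega k W i"
    using cint_arith[OF wl, of "i + 2*k"] by (simp add: add.assoc)
  then have "(i + 2*k + j) mod (3*k) \<in> cint (3*k) (i + 2*k) (i + 2*k + omega k W i)"
    unfolding cint_def using j by auto
  then have "(i + 2*k + j) mod (3*k) \<in> W" using hD iW by blast
  then have "(i + 2*k + j) mod (3*k) \<notin> Wbar k W" by (simp add: Wbar_def)
  then show ?thesis using Bp_nat[of "i + 2*k + j"] by simp
qed

definition Ssum :: "nat \<Rightarrow> nat \<Rightarrow> nat" where
  "Ssum i t = (\<Sum>j<t. omega k W (rseq k W i j))"

definition R :: "nat \<Rightarrow> nat \<Rightarrow> int" where
  "R i t = int i + int t * int k + int (Ssum i t)"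

lemma rseq_props:
  assumes iW: "i \<in> Wbar k W"
  shows "rseq k W i t \<in> Wbar k W \<and> int (rseq k W i t) mod (3 * int k) = R i t mod (3 * int k)"
proof (induction t)
  case 0
  then show ?case using iW by (simp add: R_def Ssum_def)
next
  case (Suc t)
  define r where "r = rseq k W i t"
  have rW: "r \<in> Wbar k W" and rm: "int r mod (3 * int k) = R i t mod (3 * int k)"
    using Suc r_def by auto
  have e: "rseq k W i (Suc t) = (r + k + omega k W r) mod (3*k)" using r_def by simp
  have "Bp (int r + int k + int (omega k W r))" using om_props(1)[OF rW] .
  then have m1: "rseq k W i (Suc t) \<in> Wbar k W" using e om_iff by simp
  have "int (rseq k W i (Suc t)) mod (3 * int k) = (int r + (int k + int (omega k W r))) mod (3 * int k)"
    using e by (simp add: of_nat_mod add.assoc)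
  also have "\<dots> = (R i t + (int k + int (omega k W r))) mod (3 * int k)"
    using rm by (metis mod_add_left_eq)
  also have "R i t + (int k + int (omega k W r)) = R i (Suc t)"
    unfolding R_def Ssum_def using r_def by (simp add: algebra_simps)
  finally show ?case using m1 by simp
qed

lemma R_props:
  assumes iW: "i \<in> Wbar k W"
  shows "Bp (R i t)"
    and "\<And>j. j < omega k W (rseq k W i t) \<Longrightarrow> \<not> Bp (R i t + int k + int j)"
    and "\<And>j. j \<le> omega k W (rseq k W i t) \<Longrightarrow> \<not> Bp (R i t + 2 * int k + int j)"
    and "omega k W (rseq k W i t) \<ge> 1"
proof -
  define r where "r = rseq k W i t"
  have rW: "r \<in> Wbar k W" and rm: "int r mod (3 * int k) = R i t mod (3 * int k)"
    using rseq_props[OF iW, of t] r_def by auto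
  have cg: "\<And>z. Bp (int r + z) = Bp (R i t + z)" using Bp_cong[OF rm] .
  have "Bp (int r)" using Bp_nat rW Wbar_lt by simp
  then show "Bp (R i t)" using cg[of 0] by simp
  show "\<And>j. j < omega k W (rseq k W i t) \<Longrightarrow> \<not> Bp (R i t + int k + int j)"
  proof -
    fix j assume "j < omega k W (rseq k W i t)"
    then have "\<not> Bp (int r + int k + int j)" using om_props(2)[OF rW] r_def by simp
    then show "\<not> Bp (R i t + int k + int j)" using cg[of "int k + int j"] by (simp add: add.assoc)
  qed
  show "\<And>j. j \<le> omega k W (rseq k W i t) \<Longrightarrow> \<not> Bp (R i t + 2 * int k + int j)"
  proof -
    fix j assume "j \<le> omega k W (rseq k W i t)"
    then have "\<not> Bp (int r + 2 * int k + int j)" using D_prop[OF rW] r_def by simp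
    then show "\<not> Bp (R i t + 2 * int k + int j)" using cg[of "2 * int k + int j"] by (simp add: add.assoc)
  qed
  show "omega k W (rseq k W i t) \<ge> 1" using om_props(4)[OF rW] r_def by simp
qed

lemma int_div3: "int t = 3 * int (t div 3) + int (t mod 3)"
proof -
  have "t = 3 * (t div 3) + t mod 3" by simp
  then show ?thesis by (metis of_nat_add of_nat_mult of_nat_numeral)
qed

lemma Ssum_Suc: "Ssum i (Suc t) = Ssum i t + omega k W (rseq k W i t)"
  unfolding Ssum_def by simp

lemma Ssum_mono: "t \<le> u \<Longrightarrow> Ssum i t \<le> Ssum i u"
  unfolding Ssum_def by (rule sum_mono2) auto

lemma main: "\<exists>i\<in>Wbar k W. pidx k W i mod 3 = 1"
proof -
  have "0 < 3*k" using k2 by simp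
  then have "card (Cblk k 0 \<inter> Wbar k W) \<ge> 2" using hC by blast
  then have "Cblk k 0 \<inter> Wbar k W \<noteq> {}" by (intro notI) simp
  then obtain a where aW: "a \<in> Wbar k W" by blast
  define wa where "wa = omega k W a"
  define b where "b = rseq k W a 1"
  have bW: "b \<in> Wbar k W" and bm0: "int b mod (3 * int k) = R a 1 mod (3 * int k)"
    using rseq_props[OF aW, of 1] b_def by auto
  have "R a 1 = int a + int k + int wa"
    unfolding R_def wa_def Ssum_def by simp
  then have cgb: "\<And>z. Bp (int b + z) = Bp (int a + int k + int wa + z)"
    using Bp_cong[OF bm0] by simp
  have aB: "Bp (int a)" using Bp_nat aW Wbar_lt by simp
  have amin: "\<And>j. j < wa \<Longrightarrow> \<not> Bp (int a + int k + int j)"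
    using om_props(2)[OF aW] wa_def by simp
  have bB: "Bp (int b)" using Bp_nat bW Wbar_lt by simp
  have step: "Ssum b (Suc t) \<le> k" if lt: "Ssum b t < k" for t
  proof (rule ccontr)
    assume "\<not> Ssum b (Suc t) \<le> k"
    then have gt: "omega k W (rseq k W b t) > k - Ssum b t" using Ssum_Suc lt by simp
    define d where "d = k - Ssum b t"
    have hd: "int d = int k - int (Ssum b t)" using lt d_def by simp
    have dlt: "d < omega k W (rseq k W b t)" using gt d_def by simp
    note hi = R_props(2)[OF bW, where t=t]
    note hii = R_props(3)[OF bW, where t=t]
    have RB: "Bp (R b t)" using R_props(1)[OF bW] .
    define q where "q = t div 3"
    have "t mod 3 = 0 \<or> t mod 3 = 1 \<or> t mod 3 = 2" by auto
    then show False
    proof (elim disjE)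
      assume "t mod 3 = 1"
      then have ht: "int t = 3 * int q + 1" using int_div3[of t] unfolding q_def by simp
      have "R b t + int k + int d = int b + int (q+1) * (3 * int k)"
        by (simp add: R_def hd ht algebra_simps)
      then have "Bp (R b t + int k + int d)" using Bp_shift bB by simp
      then show False using hi dlt by blast
    next
      assume "t mod 3 = 0"
      then have ht: "int t = 3 * int q" using int_div3[of t] unfolding q_def by simp
      have "R b t + 2 * int k + int d = int b + int (q+1) * (3 * int k)"
        by (simp add: R_def hd ht algebra_simps)
      then have "Bp (R b t + 2 * int k + int d)" using Bp_shift bB by simp
      then show False using hii dlt by fastforce
    next
      assume "t mod 3 = 2"
      then have ht: "int t = 3 * int q + 2" using int_div3[of t] unfolding q_def by simp
      show False
      proof (cases "d < wa")
        case True
        define j where "j = wa - d"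
        have hj: "int j = int wa - int d" using True j_def by simp
        have "int a + int k + int j = int a + int k + int wa + (- int d)" using hj by simp
        then have "Bp (int a + int k + int j) = Bp (int b + (- int d))" using cgb[of "- int d"] by (simp only:)
        also have "int b + (- int d) = R b t + (- int (q+1)) * (3 * int k)"
          by (simp add: R_def hd ht algebra_simps)
        finally have "Bp (int a + int k + int j)" using Bp_shift RB by simp
        moreover have "j < wa" using True j_def lt d_def by simp
        ultimately show False using amin by blast
      next
        case False
        define j where "j = d - wa"
        have hj: "int j = int d - int wa" using False j_def by simp
        define z where "z = int (t+3) * int k - int wa"
        have "R b t + 2 * int k + int j = int b + z"
          by (simp add: R_def hd hj z_def algebra_simps)
        then have "Bp (R b t + 2 * int k + int j) = Bp (int a + int k + int wa + z)" using cgb by simp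
        also have "int a + int k + int wa + z = int a + int (q+2) * (3 * int k)"
          by (simp add: z_def ht algebra_simps)
        finally have "Bp (R b t + 2 * int k + int j)" using Bp_shift aB by simp
        moreover have "j \<le> omega k W (rseq k W b t)" using dlt j_def by simp
        ultimately show False using hii by blast
      qed
    qed
  qed
  have Sge: "Ssum b t \<ge> t" for t
  proof (induction t)
    case 0 then show ?case by simp
  next
    case (Suc t) then show ?case using Ssum_Suc[of b t] R_props(4)[OF bW, of t] by simp
  qed
  define T where "T = (LEAST t. k \<le> Ssum b t)"
  have Tk: "k \<le> Ssum b T" unfolding T_def by (rule LeastI[of "\<lambda>t. k \<le> Ssum b t", OF Sge[of k]])
  have T0: "T \<noteq> 0"
  proof
    assume "T = 0"
    then show False using Tk k2 by (simp add: Ssum_def)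
  qed
  have "\<not> k \<le> Ssum b (T - 1)" unfolding T_def
    by (rule not_less_Least) (use T0 T_def in simp)
  then have "Ssum b (Suc (T - 1)) \<le> k" using step by simp
  then have ST: "Ssum b T = k" using T0 Tk by simp
  have RT: "R b T = int b + int T * int k + int k" using ST R_def by simp
  have RTB: "Bp (R b T)" using R_props(1)[OF bW] .
  define q where "q = T div 3"
  have T2: "T mod 3 = 2"
  proof -
    have "T mod 3 = 0 \<or> T mod 3 = 1 \<or> T mod 3 = 2" by auto
    moreover have "T mod 3 \<noteq> 0"
    proof
      assume "T mod 3 = 0"
      then have ht: "int T = 3 * int q" using int_div3[of T] unfolding q_def by simp
      have "R b T = (int b + int k) + int q * (3 * int k)" by (simp add: RT ht algebra_simps)
      then have "Bp ((int b + int k) + int q * (3 * int k))" using RTB by simp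
      then have "Bp (int b + int k)" by (simp only: Bp_shift)
      then show False using X bB by blast
    qed
    moreover have "T mod 3 \<noteq> 1"
    proof
      assume "T mod 3 = 1"
      then have ht: "int T = 3 * int q + 1" using int_div3[of T] unfolding q_def by simp
      have "R b T = (int b - int k) + int (q+1) * (3 * int k)" by (simp add: RT ht algebra_simps)
      then have "Bp ((int b - int k) + int (q+1) * (3 * int k))" using RTB by simp
      then have "Bp (int b - int k)" by (simp only: Bp_shift)
      then show False using X' bB by blast
    qed
    ultimately show ?thesis by blast
  qed
  have "pidx k W b = T - 1"
    unfolding pidx_def Ssum_def[symmetric]
  proof (rule Greatest_equality)
    show "Ssum b (T - 1) \<le> k - 1" using \<open>\<not> k \<le> Ssum b (T - 1)\<close> by simp
    fix y assume "Ssum b y \<le> k - 1"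
    show "y \<le> T - 1"
    proof (rule ccontr)
      assume "\<not> y \<le> T - 1"
      then have "T \<le> y" by simp
      then have "Ssum b T \<le> Ssum b y" by (rule Ssum_mono)
      then show False using ST k2 \<open>Ssum b y \<le> k - 1\<close> by simp
    qed
  qed
  moreover have "(T - 1) mod 3 = 1"
  proof -
    have "T = 3 * (T div 3) + T mod 3" by simp
    then have "T - 1 = 3 * (T div 3) + 1" using T2 by simp
    then show ?thesis by simp
  qed
  ultimately have "pidx k W b mod 3 = 1" by simp
  then show ?thesis using bW by blast
qed

end

theorem mainTheorem10:
  fixes k :: nat and W :: "nat set"
  assumes "k \<ge> 2"
    and "W \<subseteq> {..<3*k}"
    and "\<forall>i<3*k. card (xset k i \<inter> W) \<ge> 2"
    and "\<forall>i<3*k. card (Cblk k i \<inter> Wbar k W) \<ge> 2"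
    and "\<forall>i\<in>Wbar k W. cint (3*k) (i + 2*k) (i + 2*k + omega k W i) \<subseteq> W"
  shows "\<exists>i\<in>Wbar k W. pidx k W i mod 3 = 1"
proof -
  interpret L k W using assms by unfold_locales
  show ?thesis by (rule main)
qed

end
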